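(* Let $S$ be an abundant semigroup with a quasi-ideal adequate transversal $S^0$, let $R=\{x\in S:e_x=e_{\bar x}\}$, $L=\{x\in S:f_x=f_{\bar x}\}$ and $T=\{(x,a)\in L\times R:\bar x=\bar a\}$. If $(x,a)\in T$ then $xf_a=e_xa$.
   Context: For a semigroup $S$, $\mathcal{R}^\ast=\{(a,b): \text{for all } x,y\in S^1,\ xa=ya \iff xb=yb\}$ and $\mathcal{L}^\ast$ dually. $S$ is abundant if every $\mathcal{R}^\ast$-class and $\mathcal{L}^\ast$-class contains an idempotent; adequate if abundant with commuting idempotents. In an adequate semigroup $a^+,a^\ast$ are the unique idempotents $\mathcal{R}^\ast$-, resp. $\mathcal{L}^\ast$-related to $a$. A subsemigroup $U$ of abundant $S$ is a $\ast$-subsemigroup if $U$ is abundant and $\mathcal{L}^\ast_U=\mathcal{L}^\ast_S\cap(U\times U)$, $\mathcal{R}^\ast_U=\mathcal{R}^\ast_S\cap(U\times U)$. An adequate $\ast$-subsemigroup $S^0$ of abundant $S$ is an adequate transversal if for each $x\in S$ there is a unique $\bar x\in S^0$ and idempotents $e,f$ of $S$ with $x=e\bar xf$, $e\,\mathcal{L}\,\bar x^+$, $f\,\mathcal{R}\,\bar x^\ast$; these $e,f$ are unique and denoted $e_x,f_x$. It is a quasi-ideal adequate transversal if moreover $S^0SS^0\subseteq S^0$. *)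

theory Defs
  imports Main
begin

text \<open>A semigroup is given by a carrier set S and a binary operation m on it.
  The monoid S^1 is handled by unfolding the cases where an adjoined identity
  is one of the multipliers.\<close>

definition semigroup_on :: "'a set \<Rightarrow> ('a \<Rightarrow> 'a \<Rightarrow> 'a) \<Rightarrow> bool" where
  "semigroup_on S m \<longleftrightarrow> (\<forall>a\<in>S. \<forall>b\<in>S. m a b \<in> S) \<and>
     (\<forall>a\<in>S. \<forall>b\<in>S. \<forall>c\<in>S. m (m a b) c = m a (m b c))"

definition idem :: "('a \<Rightarrow> 'a \<Rightarrow> 'a) \<Rightarrow> 'a \<Rightarrow> bool" where
  "idem m e \<longleftrightarrow> m e e = e"

text \<open>R* on U: for all x,y in U^1, xa = ya iff xb = yb.\<close>
definition Rstar :: "'a set \<Rightarrow> ('a \<Rightarrow> 'a \<Rightarrow> 'a) \<Rightarrow> 'a \<Rightarrow> 'a \<Rightarrow> bool" where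
  "Rstar U m a b \<longleftrightarrow> a \<in> U \<and> b \<in> U \<and>
     (\<forall>x\<in>U. \<forall>y\<in>U. m x a = m y a \<longleftrightarrow> m x b = m y b) \<and>
     (\<forall>x\<in>U. m x a = a \<longleftrightarrow> m x b = b)"

text \<open>L* on U: for all x,y in U^1, ax = ay iff bx = by.\<close>
definition Lstar :: "'a set \<Rightarrow> ('a \<Rightarrow> 'a \<Rightarrow> 'a) \<Rightarrow> 'a \<Rightarrow> 'a \<Rightarrow> bool" where
  "Lstar U m a b \<longleftrightarrow> a \<in> U \<and> b \<in> U \<and>
     (\<forall>x\<in>U. \<forall>y\<in>U. m a x = m a y \<longleftrightarrow> m b x = m b y) \<and>
     (\<forall>x\<in>U. m a x = a \<longleftrightarrow> m b x = b)"

definition abundant :: "'a set \<Rightarrow> ('a \<Rightarrow> 'a \<Rightarrow> 'a) \<Rightarrow> bool" where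
  "abundant U m \<longleftrightarrow>
     (\<forall>a\<in>U. \<exists>e\<in>U. idem m e \<and> Rstar U m a e) \<and>
     (\<forall>a\<in>U. \<exists>e\<in>U. idem m e \<and> Lstar U m a e)"

definition adequate :: "'a set \<Rightarrow> ('a \<Rightarrow> 'a \<Rightarrow> 'a) \<Rightarrow> bool" where
  "adequate U m \<longleftrightarrow> abundant U m \<and>
     (\<forall>e\<in>U. \<forall>f\<in>U. idem m e \<and> idem m f \<longrightarrow> m e f = m f e)"

definition plus_of :: "'a set \<Rightarrow> ('a \<Rightarrow> 'a \<Rightarrow> 'a) \<Rightarrow> 'a \<Rightarrow> 'a" where
  "plus_of U m a = (THE e. e \<in> U \<and> idem m e \<and> Rstar U m a e)"

definition star_of :: "'a set \<Rightarrow> ('a \<Rightarrow> 'a \<Rightarrow> 'a) \<Rightarrow> 'a \<Rightarrow> 'a" where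
  "star_of U m a = (THE e. e \<in> U \<and> idem m e \<and> Lstar U m a e)"

definition star_subsemigroup :: "'a set \<Rightarrow> 'a set \<Rightarrow> ('a \<Rightarrow> 'a \<Rightarrow> 'a) \<Rightarrow> bool" where
  "star_subsemigroup U S m \<longleftrightarrow> U \<subseteq> S \<and> (\<forall>a\<in>U. \<forall>b\<in>U. m a b \<in> U) \<and> abundant U m \<and>
     (\<forall>a\<in>U. \<forall>b\<in>U. Lstar U m a b \<longleftrightarrow> Lstar S m a b) \<and>
     (\<forall>a\<in>U. \<forall>b\<in>U. Rstar U m a b \<longleftrightarrow> Rstar S m a b)"

text \<open>Green's relations L and R on S (S^1 a = S^1 b, resp. a S^1 = b S^1).\<close>
definition greenL :: "'a set \<Rightarrow> ('a \<Rightarrow> 'a \<Rightarrow> 'a) \<Rightarrow> 'a \<Rightarrow> 'a \<Rightarrow> bool" where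
  "greenL S m a b \<longleftrightarrow> a \<in> S \<and> b \<in> S \<and>
     (a = b \<or> (\<exists>u\<in>S. a = m u b)) \<and> (b = a \<or> (\<exists>v\<in>S. b = m v a))"

definition greenR :: "'a set \<Rightarrow> ('a \<Rightarrow> 'a \<Rightarrow> 'a) \<Rightarrow> 'a \<Rightarrow> 'a \<Rightarrow> bool" where
  "greenR S m a b \<longleftrightarrow> a \<in> S \<and> b \<in> S \<and>
     (a = b \<or> (\<exists>u\<in>S. a = m b u)) \<and> (b = a \<or> (\<exists>v\<in>S. b = m a v))"

definition tdecomp :: "'a set \<Rightarrow> 'a set \<Rightarrow> ('a \<Rightarrow> 'a \<Rightarrow> 'a) \<Rightarrow> 'a \<Rightarrow> 'a \<Rightarrow> 'a \<Rightarrow> 'a \<Rightarrow> bool" where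
  "tdecomp S S0 m x xb e f \<longleftrightarrow> xb \<in> S0 \<and> e \<in> S \<and> f \<in> S \<and> idem m e \<and> idem m f \<and>
     x = m (m e xb) f \<and> greenL S m e (plus_of S0 m xb) \<and> greenR S m f (star_of S0 m xb)"

definition adequate_transversal :: "'a set \<Rightarrow> 'a set \<Rightarrow> ('a \<Rightarrow> 'a \<Rightarrow> 'a) \<Rightarrow> bool" where
  "adequate_transversal S0 S m \<longleftrightarrow> adequate S0 m \<and> star_subsemigroup S0 S m \<and>
     (\<forall>x\<in>S. \<exists>!xb. \<exists>e f. tdecomp S S0 m x xb e f)"

definition quasi_ideal_adequate_transversal :: "'a set \<Rightarrow> 'a set \<Rightarrow> ('a \<Rightarrow> 'a \<Rightarrow> 'a) \<Rightarrow> bool" where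
  "quasi_ideal_adequate_transversal S0 S m \<longleftrightarrow> adequate_transversal S0 S m \<and>
     (\<forall>a\<in>S0. \<forall>s\<in>S. \<forall>b\<in>S0. m (m a s) b \<in> S0)"

definition bar :: "'a set \<Rightarrow> 'a set \<Rightarrow> ('a \<Rightarrow> 'a \<Rightarrow> 'a) \<Rightarrow> 'a \<Rightarrow> 'a" where
  "bar S S0 m x = (THE xb. \<exists>e f. tdecomp S S0 m x xb e f)"

definition e_of :: "'a set \<Rightarrow> 'a set \<Rightarrow> ('a \<Rightarrow> 'a \<Rightarrow> 'a) \<Rightarrow> 'a \<Rightarrow> 'a" where
  "e_of S S0 m x = (THE e. \<exists>f. tdecomp S S0 m x (bar S S0 m x) e f)"

definition f_of :: "'a set \<Rightarrow> 'a set \<Rightarrow> ('a \<Rightarrow> 'a \<Rightarrow> 'a) \<Rightarrow> 'a \<Rightarrow> 'a" where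
  "f_of S S0 m x = (THE f. \<exists>e. tdecomp S S0 m x (bar S S0 m x) e f)"

definition R_set :: "'a set \<Rightarrow> 'a set \<Rightarrow> ('a \<Rightarrow> 'a \<Rightarrow> 'a) \<Rightarrow> 'a set" where
  "R_set S S0 m = {x\<in>S. e_of S S0 m x = e_of S S0 m (bar S S0 m x)}"

definition L_set :: "'a set \<Rightarrow> 'a set \<Rightarrow> ('a \<Rightarrow> 'a \<Rightarrow> 'a) \<Rightarrow> 'a set" where
  "L_set S S0 m = {x\<in>S. f_of S S0 m x = f_of S S0 m (bar S S0 m x)}"

definition T_set :: "'a set \<Rightarrow> 'a set \<Rightarrow> ('a \<Rightarrow> 'a \<Rightarrow> 'a) \<Rightarrow> ('a \<times> 'a) set" where
  "T_set S S0 m = {(x, a). x \<in> L_set S S0 m \<and> a \<in> R_set S S0 m \<and> bar S S0 m x = bar S S0 m a}"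

end

theory Submission
  imports Defs
begin

lemma Rstar_c2: "Rstar U m a b \<Longrightarrow> x \<in> U \<Longrightarrow> m x a = a \<longleftrightarrow> m x b = b"
  unfolding Rstar_def by blast
lemma Lstar_c2: "Lstar U m a b \<Longrightarrow> x \<in> U \<Longrightarrow> m a x = a \<longleftrightarrow> m b x = b"
  unfolding Lstar_def by blast
lemma Rstar_c1: "Rstar U m a b \<Longrightarrow> x \<in> U \<Longrightarrow> y \<in> U \<Longrightarrow> m x a = m y a \<longleftrightarrow> m x b = m y b"
  unfolding Rstar_def by blast
lemma Lstar_c1: "Lstar U m a b \<Longrightarrow> x \<in> U \<Longrightarrow> y \<in> U \<Longrightarrow> m a x = m a y \<longleftrightarrow> m b x = m b y"
  unfolding Lstar_def by blast
lemma adequate_comm: "adequate U m \<Longrightarrow> e \<in> U \<Longrightarrow> f \<in> U \<Longrightarrow> idem m e \<Longrightarrow> idem m f \<Longrightarrow> m e f = m f e"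
  unfolding adequate_def by blast

lemma plus_facts:
  assumes "adequate U m" "b \<in> U"
  shows "plus_of U m b \<in> U \<and> idem m (plus_of U m b) \<and> Rstar U m b (plus_of U m b)"
proof -
  from assms obtain e where e: "e \<in> U" "idem m e" "Rstar U m b e"
    unfolding adequate_def abundant_def by blast
  have u: "e' = e" if "e' \<in> U" "idem m e'" "Rstar U m b e'" for e'
  proof -
    have c: "m e e' = m e' e" using adequate_comm[OF assms(1) e(1) that(1) e(2) that(2)] .
    have "m e b = b" using Rstar_c2[OF e(3) e(1)] e(2) unfolding idem_def by simp
    hence "m e e' = e'" using Rstar_c2[OF that(3) e(1)] by simp
    moreover have "m e' b = b" using Rstar_c2[OF that(3) that(1)] that(2) unfolding idem_def by simp
    hence "m e' e = e" using Rstar_c2[OF e(3) that(1)] by simp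
    ultimately show ?thesis using c by simp
  qed
  have "plus_of U m b = e" unfolding plus_of_def
    by (rule the_equality) (use e in simp, use u in blast)
  thus ?thesis using e by simp
qed

lemma star_facts:
  assumes "adequate U m" "b \<in> U"
  shows "star_of U m b \<in> U \<and> idem m (star_of U m b) \<and> Lstar U m b (star_of U m b)"
proof -
  from assms obtain e where e: "e \<in> U" "idem m e" "Lstar U m b e"
    unfolding adequate_def abundant_def by blast
  have u: "e' = e" if "e' \<in> U" "idem m e'" "Lstar U m b e'" for e'
  proof -
    have c: "m e e' = m e' e" using adequate_comm[OF assms(1) e(1) that(1) e(2) that(2)] .
    have "m b e = b" using Lstar_c2[OF e(3) e(1)] e(2) unfolding idem_def by simp
    hence "m e' e = e'" using Lstar_c2[OF that(3) e(1)] by simp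
    moreover have "m b e' = b" using Lstar_c2[OF that(3) that(1)] that(2) unfolding idem_def by simp
    hence "m e e' = e" using Lstar_c2[OF e(3) that(1)] by simp
    ultimately show ?thesis using c by simp
  qed
  have "star_of U m b = e" unfolding star_of_def
    by (rule the_equality) (use e in simp, use u in blast)
  thus ?thesis using e by simp
qed
lemma decomp_unique:
  assumes sg: "semigroup_on S m" and ss: "star_subsemigroup S0 S m" and ad: "adequate S0 m"
    and d1: "tdecomp S S0 m x b e f" and d2: "tdecomp S S0 m x b e' f'"
  shows "e = e' \<and> f = f'"
proof -
  have cl: "\<And>u v. u\<in>S \<Longrightarrow> v\<in>S \<Longrightarrow> m u v \<in> S" using sg unfolding semigroup_on_def by blast
  have as: "\<And>u v w. u\<in>S \<Longrightarrow> v\<in>S \<Longrightarrow> w\<in>S \<Longrightarrow> m (m u v) w = m u (m v w)"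
    using sg unfolding semigroup_on_def by blast
  have sub: "S0 \<subseteq> S" using ss unfolding star_subsemigroup_def by blast
  have b: "b \<in> S0" using d1 unfolding tdecomp_def by blast
  define p where "p = plus_of S0 m b"
  define q where "q = star_of S0 m b"
  have p: "p \<in> S0" "idem m p" "Rstar S0 m b p" using plus_facts[OF ad b] p_def by auto
  have q: "q \<in> S0" "idem m q" "Lstar S0 m b q" using star_facts[OF ad b] q_def by auto
  have pS: "Rstar S m b p" using ss p b unfolding star_subsemigroup_def by blast
  have qS: "Lstar S m b q" using ss q b unfolding star_subsemigroup_def by blast
  have bq: "m b q = b" using q unfolding Lstar_def idem_def by blast
  have pb: "m p b = b" using p unfolding Rstar_def idem_def by blast
  have bS: "b \<in> S" "p \<in> S" "q \<in> S" using b p q sub by auto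
  have gen: "m x q = m e b \<and> m p x = m b f" if d: "tdecomp S S0 m x b e f" for e f
  proof -
    have eS: "e \<in> S" "f \<in> S" "idem m e" "idem m f" and x: "x = m (m e b) f"
      and gl: "greenL S m e p" and gr: "greenR S m f q"
      using d unfolding tdecomp_def p_def q_def by auto
    have pe: "m p e = p"
    proof -
      from gl have "p = e \<or> (\<exists>v\<in>S. p = m v e)" unfolding greenL_def by blast
      thus ?thesis
      proof
        assume "p = e" thus ?thesis using eS unfolding idem_def by simp
      next
        assume "\<exists>v\<in>S. p = m v e"
        then obtain v where v: "v \<in> S" "p = m v e" by blast
        have "m (m v e) e = m v (m e e)" using as[of v e e] v eS by simp
        thus ?thesis using v eS unfolding idem_def by simp
      qed
    qed
    have fq: "m f q = q"
    proof -
      from gr have "q = f \<or> (\<exists>v\<in>S. q = m f v)" unfolding greenR_def by blast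
      thus ?thesis
      proof
        assume "q = f" thus ?thesis using eS unfolding idem_def by simp
      next
        assume "\<exists>v\<in>S. q = m f v"
        then obtain v where v: "v \<in> S" "q = m f v" by blast
        have "m (m f f) v = m f (m f v)" using as[of f f v] v eS by simp
        thus ?thesis using v eS unfolding idem_def by simp
      qed
    qed
    have "m x q = m (m e b) (m f q)" using x as[of "m e b" f q] cl eS bS by simp
    hence "m x q = m e b" using fq bq as[of e b q] eS bS by simp
    moreover have "m p x = m b f"
    proof -
      have "m p x = m (m p (m e b)) f" using x as[of p "m e b" f] cl eS bS by simp
      also have "m p (m e b) = b" using as[of p e b] eS bS pe pb by simp
      finally show ?thesis .
    qed
    ultimately show ?thesis by simp
  qed
  have e: "e\<in>S" "e'\<in>S" "f\<in>S" "f'\<in>S" using d1 d2 unfolding tdecomp_def by auto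
  have g1: "m e b = m e' b" using gen[OF d1] gen[OF d2] by simp
  have g2: "m b f = m b f'" using gen[OF d1] gen[OF d2] by simp
  have gl1: "greenL S m e p" "greenL S m e' p" "greenR S m f q" "greenR S m f' q"
    using d1 d2 unfolding tdecomp_def p_def q_def by auto
  have ep: "m u p = u" if "greenL S m u p" "idem m u" "u \<in> S" for u
  proof -
    from that have "u = p \<or> (\<exists>v\<in>S. u = m v p)" unfolding greenL_def by blast
    thus ?thesis
    proof
      assume "u = p" thus ?thesis using that unfolding idem_def by simp
    next
      assume "\<exists>v\<in>S. u = m v p"
      then obtain v where v: "v \<in> S" "u = m v p" by blast
      have "m (m v p) p = m v (m p p)" using as[of v p p] v bS by simp
      thus ?thesis using v p(2) unfolding idem_def by simp
    qed
  qed
  have qf: "m q u = u" if "greenR S m u q" "idem m u" "u \<in> S" for u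
  proof -
    from that have "u = q \<or> (\<exists>v\<in>S. u = m q v)" unfolding greenR_def by blast
    thus ?thesis
    proof
      assume "u = q" thus ?thesis using that unfolding idem_def by simp
    next
      assume "\<exists>v\<in>S. u = m q v"
      then obtain v where v: "v \<in> S" "u = m q v" by blast
      have "m (m q q) v = m q (m q v)" using as[of q q v] v bS by simp
      thus ?thesis using v q(2) unfolding idem_def by simp
    qed
  qed
  have "m e p = m e' p" using pS g1 e unfolding Rstar_def by blast
  moreover have "idem m e" "idem m e'" "idem m f" "idem m f'" using d1 d2 unfolding tdecomp_def by auto
  ultimately have ee: "e = e'" using ep[of e] ep[of e'] gl1 e by simp
  have "m q f = m q f'" using qS g2 e unfolding Lstar_def by blast
  then have "f = f'" using qf[of f] qf[of f'] gl1 e \<open>idem m f\<close> \<open>idem m f'\<close> by simp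
  with ee show ?thesis by simp
qed

lemma decomp_facts:
  assumes sg: "semigroup_on S m" and at: "adequate_transversal S0 S m" and x: "x \<in> S"
  shows "\<exists>b e f. tdecomp S S0 m x b e f \<and> bar S S0 m x = b \<and> e_of S S0 m x = e \<and> f_of S S0 m x = f"
proof -
  have ex: "\<exists>!xb. \<exists>e f. tdecomp S S0 m x xb e f" using at x unfolding adequate_transversal_def by blast
  then obtain b e f where d: "tdecomp S S0 m x b e f" by blast
  have bb: "bar S S0 m x = b" unfolding bar_def by (rule the1_equality[OF ex]) (use d in blast)
  have ss: "star_subsemigroup S0 S m" "adequate S0 m" using at unfolding adequate_transversal_def by blast+
  have "e_of S S0 m x = e" unfolding e_of_def bb
    by (rule the_equality) (use d in blast, use decomp_unique[OF sg ss(1) ss(2) d] in blast)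
  moreover have "f_of S S0 m x = f" unfolding f_of_def bb
    by (rule the_equality) (use d in blast, use decomp_unique[OF sg ss(1) ss(2) d] in blast)
  ultimately show ?thesis using d bb by blast
qed

theorem lemma2p4:
  fixes S S0 :: "'a set" and m :: "'a \<Rightarrow> 'a \<Rightarrow> 'a" and x a :: 'a
  assumes "semigroup_on S m"
    and "abundant S m"
    and "quasi_ideal_adequate_transversal S0 S m"
    and "(x, a) \<in> T_set S S0 m"
  shows "m x (f_of S S0 m a) = m (e_of S S0 m x) a"
proof -
  have sg: "semigroup_on S m" by fact
  have at: "adequate_transversal S0 S m" using assms(3) unfolding quasi_ideal_adequate_transversal_def by blast
  have ss: "star_subsemigroup S0 S m" "adequate S0 m" using at unfolding adequate_transversal_def by blast+
  have cl: "\<And>u v. u\<in>S \<Longrightarrow> v\<in>S \<Longrightarrow> m u v \<in> S" using sg unfolding semigroup_on_def by blast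
  have as: "\<And>u v w. u\<in>S \<Longrightarrow> v\<in>S \<Longrightarrow> w\<in>S \<Longrightarrow> m (m u v) w = m u (m v w)"
    using sg unfolding semigroup_on_def by blast
  have sub: "S0 \<subseteq> S" using ss unfolding star_subsemigroup_def by blast
  have xL: "x \<in> S" "f_of S S0 m x = f_of S S0 m (bar S S0 m x)"
    and aR: "a \<in> S" "e_of S S0 m a = e_of S S0 m (bar S S0 m a)"
    and xa: "bar S S0 m x = bar S S0 m a"
    using assms(4) unfolding T_set_def L_set_def R_set_def by auto
  obtain b ex fx where dx: "tdecomp S S0 m x b ex fx" "bar S S0 m x = b" "e_of S S0 m x = ex" "f_of S S0 m x = fx"
    using decomp_facts[OF sg at xL(1)] by blast
  obtain b' ea fa where da: "tdecomp S S0 m a b' ea fa" "bar S S0 m a = b'" "e_of S S0 m a = ea" "f_of S S0 m a = fa"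
    using decomp_facts[OF sg at aR(1)] by blast
  have bb': "b' = b" using xa dx da by simp
  have b: "b \<in> S0" using dx unfolding tdecomp_def by blast
  define p where "p = plus_of S0 m b"
  define q where "q = star_of S0 m b"
  have p: "p \<in> S0" "idem m p" "Rstar S0 m b p" using plus_facts[OF ss(2) b] p_def by auto
  have q: "q \<in> S0" "idem m q" "Lstar S0 m b q" using star_facts[OF ss(2) b] q_def by auto
  have bq: "m b q = b" using q unfolding Lstar_def idem_def by blast
  have pb: "m p b = b" using p unfolding Rstar_def idem_def by blast
  have bS: "b \<in> S" "p \<in> S" "q \<in> S" using b p q sub by auto
  have db: "tdecomp S S0 m b b p q"
    unfolding tdecomp_def greenL_def greenR_def using b bS p q bq pb p_def q_def by simp
  obtain b2 e2 f2 where d2: "tdecomp S S0 m b b2 e2 f2" "bar S S0 m b = b2" "e_of S S0 m b = e2" "f_of S S0 m b = f2"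
    using decomp_facts[OF sg at bS(1)] by blast
  have exb: "\<exists>!xb. \<exists>e f. tdecomp S S0 m b xb e f" using at bS(1) unfolding adequate_transversal_def by blast
  have un: "\<And>y z. (\<exists>e f. tdecomp S S0 m b y e f) \<Longrightarrow> (\<exists>e f. tdecomp S S0 m b z e f) \<Longrightarrow> y = z"
    using exb by blast
  have "b2 = b" by (rule un) (use db d2(1) in blast)+
  hence "e2 = p \<and> f2 = q" using decomp_unique[OF sg ss(1) ss(2) db] d2(1) by blast
  hence fx: "fx = q" and ea: "ea = p" using xL(2) aR(2) dx da d2 bb' by auto
  have exS: "ex \<in> S" "fa \<in> S" using dx da unfolding tdecomp_def by auto
  have "x = m (m ex b) q" using dx(1) fx unfolding tdecomp_def by simp
  hence x: "x = m ex b" using bq as[of ex b q] exS bS by simp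
  have "a = m (m p b) fa" using da(1) ea bb' unfolding tdecomp_def by simp
  hence a: "a = m b fa" using pb by simp
  have "m x fa = m ex a" using x a as[of ex b fa] exS bS by simp
  thus ?thesis using dx(3) da(4) by simp
qed

end
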